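(* Consider the repeated long trading strategy described in the context, and let $\mu_t=\frac1t\ln\frac{W_t}{W_0}$. If the first two moments of the trade length are finite, then $\mathbb{V}[\mu_t]=O(1/t)$ as $t\to\infty$.
   Context: An investor can hold a risk-free asset with zero interest rate and a risky security with price $p_t=e^{X_t}$, where $(X_t)_{t\ge0}$ is a continuous stochastic process. Transaction costs are proportional to the price, with total cost parameter $c>0$ per trade. Fix levels $L<D<U$ with $U-D>c$ and a leverage $f\ge0$. The strategy: when $X$ reaches $D$, invest the fraction $f$ of the whole wealth in the risky security; close the position the first time $X$ leaves $(L,U)$, at $U$ (positive scenario) or at $L$ (negative scenario); then wait for $X$ to return to $D$ and repeat. Let $\tau_e=\inf\{t:X_t\notin(L,U)\}$ with $X_0=D$, $p^+=\mathbb{P}[X_{\tau_e}=U\mid X_0=D]$, $p^-=1-p^+$. The trade length is the time between two successive trades: $\tau^+=\tau_e+\inf\{t:X_t\le D\mid X_0=U\}$ in the positive scenario and $\tau^-=\tau_e+\inf\{t:X_t\ge D\mid X_0=L\}$ in the negative scenario; its distribution is the mixture with weights $p^+,p^-$ of those of $\tau^+,\tau^-$. Set $v^\pm$ by $v^+=e^{U-D-c}-1$, $v^-=e^{L-D-c}-1$. The wealth at successive trade times satisfies $W_{t_{i+1}}=W_{t_i}(1+fv)$ with $v=v^+$ (positive scenario) or $v=v^-$ (negative scenario), and $W_t$ is the wealth right after the last trade before $t$. Successive trades (outcomes and trade lengths) are independent and identically distributed, so the trade times form an ordinary renewal process. *)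

theory Defs
  imports "HOL-Probability.Probability" "HOL-Library.Landau_Symbols"
begin

definition vplus :: "real \<Rightarrow> real \<Rightarrow> real \<Rightarrow> real" where
  "vplus D U c = exp (U - D - c) - 1"

definition vminus :: "real \<Rightarrow> real \<Rightarrow> real \<Rightarrow> real" where
  "vminus L D c = exp (L - D - c) - 1"

text \<open>Wealth multiplier of one trade with leverage f; outcome True = positive scenario
  (exit at U), False = negative scenario (exit at L).\<close>
definition trade_factor :: "real \<Rightarrow> real \<Rightarrow> real \<Rightarrow> real \<Rightarrow> real \<Rightarrow> bool \<Rightarrow> real" where
  "trade_factor f L D U c s = 1 + f * (if s then vplus D U c else vminus L D c)"

text \<open>Measurable space of one trade: (outcome, trade length).\<close>
definition trade_space :: "(bool \<times> real) measure" where
  "trade_space = count_space UNIV \<Otimes>\<^sub>M borel"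

definition num_trades :: "(nat \<Rightarrow> 'a \<Rightarrow> real) \<Rightarrow> real \<Rightarrow> 'a \<Rightarrow> nat" where
  "num_trades T t \<omega> = card {n. 1 \<le> n \<and> (\<Sum>i<n. T i \<omega>) \<le> t}"

definition wealth :: "real \<Rightarrow> real \<Rightarrow> real \<Rightarrow> real \<Rightarrow> real \<Rightarrow> real \<Rightarrow>
    (nat \<Rightarrow> 'a \<Rightarrow> bool) \<Rightarrow> (nat \<Rightarrow> 'a \<Rightarrow> real) \<Rightarrow> real \<Rightarrow> 'a \<Rightarrow> real" where
  "wealth W0 f L D U c S T t \<omega> =
     W0 * (\<Prod>i<num_trades T t \<omega>. trade_factor f L D U c (S i \<omega>))"

definition growth_rate :: "real \<Rightarrow> real \<Rightarrow> real \<Rightarrow> real \<Rightarrow> real \<Rightarrow> real \<Rightarrow>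
    (nat \<Rightarrow> 'a \<Rightarrow> bool) \<Rightarrow> (nat \<Rightarrow> 'a \<Rightarrow> real) \<Rightarrow> real \<Rightarrow> 'a \<Rightarrow> real" where
  "growth_rate W0 f L D U c S T t \<omega> = (1 / t) * ln (wealth W0 f L D U c S T t \<omega> / W0)"

end

theory Submission
  imports Defs
begin

lemma exp_minus_quad: fixes x :: real assumes "0 \<le> x" shows "exp (-x) \<le> 1 - x + x\<^sup>2/2"
proof -
  let ?g = "\<lambda>x::real. 1 - x + x\<^sup>2/2 - exp (-x)"
  have "?g 0 \<le> ?g x"
  proof (rule DERIV_nonneg_imp_increasing_open[OF assms])
    fix y :: real assume "0 < y" "y < x"
    show "\<exists>d. DERIV ?g y :> d \<and> d \<ge> 0"
      apply (rule exI[of _ "-1 + y + exp (-y)"])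
      apply (intro conjI)
       apply (auto intro!: derivative_eq_intros simp: power2_eq_square)
      using exp_minus_ge[of y] by linarith
  qed (auto intro!: continuous_intros)
  then show ?thesis by simp
qed

lemma three_sq: fixes a b c :: real shows "(a + b + c)\<^sup>2 \<le> 3 * a\<^sup>2 + 3 * b\<^sup>2 + 3 * c\<^sup>2"
proof -
  have "0 \<le> (a - b)\<^sup>2 + (b - c)\<^sup>2 + (a - c)\<^sup>2" by simp
  then show ?thesis by (simp add: power2_eq_square algebra_simps)
qed

lemma path_bound:
  fixes x y :: "nat \<Rightarrow> real" and t K rho :: real and k :: nat
  assumes xpos: "\<And>i. x i > 0" and yb: "\<And>i. \<bar>y i\<bar> \<le> K" and t: "t > 0"
    and fin: "finite {n. (\<Sum>i<n. x i) \<le> t}"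
    and k: "card {n. (\<Sum>i<n. x i) \<le> t} \<le> k"
  shows "((\<Sum>i<card {n. 1 \<le> n \<and> (\<Sum>i<n. x i) \<le> t}. y i) - rho * t)\<^sup>2
     \<le> 3 * (\<Sum>i<k. (y i - rho * x i) * of_bool ((\<Sum>l<i. x l) \<le> t))\<^sup>2 + 3 * K\<^sup>2
       + 3 * rho\<^sup>2 * (\<Sum>i<k. (x i)\<^sup>2 * of_bool ((\<Sum>l<i. x l) \<le> t))"
proof -
  define P where "P n = (\<Sum>i<n. x i)" for n
  define B where "B = {n. P n \<le> t}"
  have Pmono: "P m \<le> P n" if "m \<le> n" for m n
    unfolding P_def using that xpos by (intro sum_mono2) (auto intro: less_imp_le)
  have PSuc: "P (Suc n) = P n + x n" for n unfolding P_def by simp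
  have finB: "finite B" using fin unfolding B_def P_def by simp
  have B0: "0 \<in> B" unfolding B_def P_def using t by simp
  define j where "j = Max B"
  have jB: "j \<in> B" unfolding j_def using finB B0 by (intro Max_in) auto
  have Beq: "B = {..j}"
  proof
    show "B \<subseteq> {..j}" unfolding j_def using finB by auto
    show "{..j} \<subseteq> B" using jB Pmono unfolding B_def by (auto intro: order_trans)
  qed
  have Pj: "P j \<le> t" using jB unfolding B_def by simp
  have Pj1: "P (Suc j) > t"
  proof -
    have "Suc j \<notin> B" using Beq by simp
    then show ?thesis unfolding B_def by simp
  qed
  have cardB: "card {n. (\<Sum>i<n. x i) \<le> t} = Suc j"
    using Beq unfolding B_def P_def by simp
  have N: "card {n. 1 \<le> n \<and> (\<Sum>i<n. x i) \<le> t} = j"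
  proof -
    have "{n. 1 \<le> n \<and> (\<Sum>i<n. x i) \<le> t} = {1..j}"
      using Beq unfolding B_def P_def by auto
    then show ?thesis by simp
  qed
  have indeq: "of_bool ((\<Sum>l<i. x l) \<le> t) = (of_bool (i \<le> j) :: real)" for i
    using Beq unfolding B_def P_def by auto
  have kj: "Suc j \<le> k" using k cardB by simp
  have sumcut: "(\<Sum>i<k. f i * of_bool ((\<Sum>l<i. x l) \<le> t)) = (\<Sum>i<Suc j. f i)" for f :: "nat \<Rightarrow> real"
  proof -
    have "(\<Sum>i<k. f i * of_bool ((\<Sum>l<i. x l) \<le> t)) = (\<Sum>i<Suc j. f i * of_bool ((\<Sum>l<i. x l) \<le> t))"
      using kj by (intro sum.mono_neutral_right) (auto simp: indeq)
    also have "\<dots> = (\<Sum>i<Suc j. f i)" by (intro sum.cong) (auto simp: indeq)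
    finally show ?thesis .
  qed
  define Qv where "Qv = (\<Sum>i<Suc j. y i - rho * x i)"
  define d where "d = P (Suc j) - t"
  have d0: "0 \<le> d" using Pj1 d_def by simp
  have dx: "d \<le> x j" using Pj PSuc[of j] d_def by simp
  have key: "(\<Sum>i<j. y i) - rho * t = Qv + (- y j) + rho * d"
    unfolding Qv_def d_def P_def by (simp add: sum_subtractf sum_distrib_left algebra_simps)
  have "((\<Sum>i<j. y i) - rho * t)\<^sup>2 \<le> 3 * Qv\<^sup>2 + 3 * (- y j)\<^sup>2 + 3 * (rho * d)\<^sup>2"
    unfolding key by (rule three_sq)
  also have "\<dots> \<le> 3 * Qv\<^sup>2 + 3 * K\<^sup>2 + 3 * rho\<^sup>2 * (\<Sum>i<Suc j. (x i)\<^sup>2)"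
  proof -
    have "(y j)\<^sup>2 \<le> K\<^sup>2" using yb[of j] by (metis abs_ge_zero power2_abs power_mono)
    moreover have "d\<^sup>2 \<le> (x j)\<^sup>2" using d0 dx by (simp add: power_mono)
    moreover have "(x j)\<^sup>2 \<le> (\<Sum>i<Suc j. (x i)\<^sup>2)"
      by (rule member_le_sum) auto
    ultimately have "d\<^sup>2 \<le> (\<Sum>i<Suc j. (x i)\<^sup>2)" by linarith
    then have "rho\<^sup>2 * d\<^sup>2 \<le> rho\<^sup>2 * (\<Sum>i<Suc j. (x i)\<^sup>2)" by (intro mult_left_mono) auto
    with \<open>(y j)\<^sup>2 \<le> K\<^sup>2\<close> show ?thesis by (simp add: power_mult_distrib)
  qed
  finally show ?thesis unfolding N sumcut Qv_def by simp
qed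

lemma trade_space_fst[measurable]: "fst \<in> measurable trade_space (count_space UNIV)"
  unfolding trade_space_def by measurable
lemma trade_space_snd[measurable]: "snd \<in> borel_measurable trade_space"
  unfolding trade_space_def by measurable
lemma trade_space_fun[measurable]:
  fixes h :: "bool \<Rightarrow> real"
  shows "(\<lambda>x. h (fst x)) \<in> borel_measurable trade_space"
  by measurable

locale renew = prob_space M for M :: "'a measure" +
  fixes X :: "nat \<Rightarrow> 'a \<Rightarrow> bool \<times> real"
  assumes indep: "indep_vars (\<lambda>_. trade_space) X UNIV"
  and ident: "\<And>i. distr M trade_space (X i) = distr M trade_space (X 0)"
  and Tpos: "\<And>i. AE \<omega> in M. snd (X i \<omega>) > 0"
  and int1: "integrable M (\<lambda>\<omega>. snd (X 0 \<omega>))"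
  and int2: "integrable M (\<lambda>\<omega>. (snd (X 0 \<omega>))\<^sup>2)"
begin

lemma X_meas[measurable]: "X i \<in> measurable M trade_space"
  using indep unfolding indep_vars_def by auto

lemma ident_integral:
  fixes h :: "bool \<times> real \<Rightarrow> real"
  assumes [measurable]: "h \<in> borel_measurable trade_space"
  shows "integral\<^sup>L M (\<lambda>\<omega>. h (X i \<omega>)) = integral\<^sup>L M (\<lambda>\<omega>. h (X 0 \<omega>))"
    and "integrable M (\<lambda>\<omega>. h (X i \<omega>)) \<longleftrightarrow> integrable M (\<lambda>\<omega>. h (X 0 \<omega>))"
proof -
  show "integral\<^sup>L M (\<lambda>\<omega>. h (X i \<omega>)) = integral\<^sup>L M (\<lambda>\<omega>. h (X 0 \<omega>))"
    using integral_distr[OF X_meas assms, of i] integral_distr[OF X_meas assms, of 0] ident[of i]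
    by simp
  show "integrable M (\<lambda>\<omega>. h (X i \<omega>)) \<longleftrightarrow> integrable M (\<lambda>\<omega>. h (X 0 \<omega>))"
    using integrable_distr_eq[OF X_meas assms, of i] integrable_distr_eq[OF X_meas assms, of 0] ident[of i]
    by simp
qed

lemma indep_split:
  fixes g :: "(nat \<Rightarrow> bool \<times> real) \<Rightarrow> real" and h :: "bool \<times> real \<Rightarrow> real"
  assumes g[measurable]: "g \<in> borel_measurable (PiM {..<k} (\<lambda>_. trade_space))"
    and h[measurable]: "h \<in> borel_measurable trade_space"
    and G: "\<And>\<omega>. G \<omega> = g (restrict (\<lambda>i. X i \<omega>) {..<k})"
    and iG: "integrable M G" and iH: "integrable M (\<lambda>\<omega>. h (X k \<omega>))"
  shows "integrable M (\<lambda>\<omega>. G \<omega> * h (X k \<omega>))"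
    and "integral\<^sup>L M (\<lambda>\<omega>. G \<omega> * h (X k \<omega>)) = integral\<^sup>L M G * integral\<^sup>L M (\<lambda>\<omega>. h (X k \<omega>))"
proof -
  have iv: "indep_var (PiM {..<k} (\<lambda>_. trade_space)) (\<lambda>\<omega>. restrict (\<lambda>i. X i \<omega>) {..<k})
     (PiM {k} (\<lambda>_. trade_space)) (\<lambda>\<omega>. restrict (\<lambda>i. X i \<omega>) {k})"
    by (rule indep_var_restrict[OF indep]) auto
  have hm: "(\<lambda>x. h (x k)) \<in> borel_measurable (PiM {k} (\<lambda>_. trade_space))"
    by measurable
  have iv2: "indep_var borel G borel (\<lambda>\<omega>. h (X k \<omega>))"
    using indep_var_compose[OF iv g hm] by (simp add: comp_def G[symmetric])
  show "integrable M (\<lambda>\<omega>. G \<omega> * h (X k \<omega>))"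
    by (rule indep_var_integrable[OF iv2 iG iH])
  show "integral\<^sup>L M (\<lambda>\<omega>. G \<omega> * h (X k \<omega>)) = integral\<^sup>L M G * integral\<^sup>L M (\<lambda>\<omega>. h (X k \<omega>))"
    by (rule indep_var_lebesgue_integral[OF iv2 iG iH])
qed


definition "mT = expectation (\<lambda>\<omega>. snd (X 0 \<omega>))"
definition "E2 = expectation (\<lambda>\<omega>. (snd (X 0 \<omega>))\<^sup>2)"
definition "phi \<theta> = expectation (\<lambda>\<omega>. exp (- \<theta> * snd (X 0 \<omega>)))"
definition "Ps n \<omega> = (\<Sum>i<n. snd (X i \<omega>))"
definition "Aset t n = {\<omega> \<in> space M. Ps n \<omega> \<le> t}"

lemma Ps_meas[measurable]: "Ps n \<in> borel_measurable M"
  unfolding Ps_def by measurable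

lemma Aset_sets[measurable]: "Aset t n \<in> sets M"
  unfolding Aset_def by measurable

lemma mT_pos: "mT > 0"
proof -
  have ge: "mT \<ge> 0" unfolding mT_def
    by (rule integral_nonneg_AE) (use Tpos[of 0] in \<open>auto elim: AE_mp\<close>)
  have "mT \<noteq> 0"
  proof
    assume "mT = 0"
    then have "AE \<omega> in M. snd (X 0 \<omega>) = 0"
      unfolding mT_def
      by (subst integral_nonneg_eq_0_iff_AE[symmetric]) (use int1 Tpos[of 0] in \<open>auto elim: AE_mp\<close>)
    with Tpos[of 0] have "AE \<omega> in M. False" by eventually_elim auto
    then show False by simp
  qed
  with ge show ?thesis by simp
qed

lemma E2_nonneg: "E2 \<ge> 0"
  unfolding E2_def by simp

lemma expint: assumes "\<theta> \<ge> 0" shows "integrable M (\<lambda>\<omega>. exp (- \<theta> * snd (X i \<omega>)))"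
proof (rule integrable_const_bound[where B=1])
  show "AE \<omega> in M. norm (exp (- \<theta> * snd (X i \<omega>))) \<le> 1"
    using Tpos[of i] by eventually_elim (use assms in \<open>auto simp: mult_nonneg_nonneg\<close>)
qed measurable

lemma phi_i: "expectation (\<lambda>\<omega>. exp (- \<theta> * snd (X i \<omega>))) = phi \<theta>"
  unfolding phi_def by (rule ident_integral) measurable

lemma phi_i': "expectation (\<lambda>\<omega>. exp (- (\<theta> * snd (X i \<omega>)))) = phi \<theta>"
  using phi_i[of \<theta> i] by simp

lemma phi_nonneg: "phi \<theta> \<ge> 0"
  unfolding phi_def by simp

lemma phi_le: assumes "\<theta> > 0" "\<theta> * E2 \<le> mT" shows "phi \<theta> \<le> 1 - \<theta> * mT / 2"
proof -
  have "phi \<theta> \<le> expectation (\<lambda>\<omega>. 1 - \<theta> * snd (X 0 \<omega>) + (\<theta>\<^sup>2/2) * (snd (X 0 \<omega>))\<^sup>2)"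
    unfolding phi_def
  proof (rule integral_mono_AE)
    show "integrable M (\<lambda>\<omega>. exp (- \<theta> * snd (X 0 \<omega>)))" using expint assms by simp
    show "integrable M (\<lambda>\<omega>. 1 - \<theta> * snd (X 0 \<omega>) + (\<theta>\<^sup>2/2) * (snd (X 0 \<omega>))\<^sup>2)"
      using int1 int2 by auto
    show "AE \<omega> in M. exp (- \<theta> * snd (X 0 \<omega>)) \<le> 1 - \<theta> * snd (X 0 \<omega>) + (\<theta>\<^sup>2/2) * (snd (X 0 \<omega>))\<^sup>2"
      using Tpos[of 0]
    proof eventually_elim
      case (elim \<omega>)
      then have "exp (- (\<theta> * snd (X 0 \<omega>))) \<le> 1 - (\<theta> * snd (X 0 \<omega>)) + (\<theta> * snd (X 0 \<omega>))\<^sup>2/2"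
        using assms by (intro exp_minus_quad) simp
      then show ?case by (simp add: power_mult_distrib)
    qed
  qed
  also have "\<dots> = 1 - \<theta> * mT + (\<theta>\<^sup>2/2) * E2"
    unfolding mT_def E2_def using int1 int2 by (simp add: prob_space)
  also have "\<dots> \<le> 1 - \<theta> * mT / 2"
  proof -
    have "(\<theta>\<^sup>2/2) * E2 = (\<theta>/2) * (\<theta> * E2)" by (simp add: power2_eq_square)
    also have "\<dots> \<le> (\<theta>/2) * mT" using assms by (intro mult_left_mono) auto
    finally show ?thesis by simp
  qed
  finally show ?thesis .
qed

lemma prob_Aset: assumes "\<theta> > 0"
  shows "emeasure M (Aset t n) \<le> ennreal (exp (\<theta> * t) * phi \<theta> ^ n)"
proof -
  define Y where "Y = (\<lambda>i \<omega>. exp (- \<theta> * snd (X i \<omega>)))"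
  have indY: "indep_vars (\<lambda>_. borel) Y UNIV"
    unfolding Y_def by (rule indep_vars_compose2[OF indep]) measurable
  have prodint: "expectation (\<lambda>\<omega>. \<Prod>i\<in>{..<n}. Y i \<omega>) = (\<Prod>i\<in>{..<n}. expectation (Y i))"
    "integrable M (\<lambda>\<omega>. \<Prod>i\<in>{..<n}. Y i \<omega>)"
  proof -
    have indYn: "indep_vars (\<lambda>_. borel) Y {..<n}" using indep_vars_subset[OF indY] by simp
    have intY: "\<And>i. integrable M (Y i)" unfolding Y_def using expint assms by simp
    show "expectation (\<lambda>\<omega>. \<Prod>i\<in>{..<n}. Y i \<omega>) = (\<Prod>i\<in>{..<n}. expectation (Y i))"
      by (rule indep_vars_lebesgue_integral[OF _ indYn intY]) simp
    show "integrable M (\<lambda>\<omega>. \<Prod>i\<in>{..<n}. Y i \<omega>)"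
      by (rule indep_vars_integrable[OF _ indYn intY]) simp
  qed
  have "emeasure M (Aset t n) = (\<integral>\<^sup>+ \<omega>. indicator (Aset t n) \<omega> \<partial>M)" by simp
  also have "\<dots> \<le> (\<integral>\<^sup>+ \<omega>. ennreal (exp (\<theta> * t) * (\<Prod>i\<in>{..<n}. Y i \<omega>)) \<partial>M)"
  proof (rule nn_integral_mono)
    fix \<omega> assume "\<omega> \<in> space M"
    have eq: "(\<Prod>i\<in>{..<n}. Y i \<omega>) = exp (- \<theta> * Ps n \<omega>)"
      unfolding Y_def Ps_def by (simp add: exp_sum sum_distrib_left)
    show "indicator (Aset t n) \<omega> \<le> ennreal (exp (\<theta> * t) * (\<Prod>i\<in>{..<n}. Y i \<omega>))"
    proof (cases "\<omega> \<in> Aset t n")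
      case True
      then have "Ps n \<omega> \<le> t" by (simp add: Aset_def)
      then have "1 \<le> exp (\<theta> * t - \<theta> * Ps n \<omega>)" using assms
        by (simp add: mult_left_mono)
      then show ?thesis using True by (simp add: eq exp_diff exp_minus field_simps)
    qed simp
  qed
  also have "\<dots> = ennreal (expectation (\<lambda>\<omega>. exp (\<theta> * t) * (\<Prod>i\<in>{..<n}. Y i \<omega>)))"
    using prodint by (intro nn_integral_eq_integral) (auto simp: Y_def prod_nonneg)
  also have "\<dots> = ennreal (exp (\<theta> * t) * phi \<theta> ^ n)"
    using prodint by (simp add: Y_def phi_i')
  finally show ?thesis .
qed

definition "Ebound t = 2 * exp 1 * max t (E2 / mT) / mT"

lemma sum_prob: assumes "t > 0"
  shows "(\<Sum>n. emeasure M (Aset t n)) \<le> ennreal (Ebound t)"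
proof -
  define \<theta> where "\<theta> = 1 / max t (E2 / mT)"
  have mx: "max t (E2 / mT) > 0" using assms by simp
  have th: "\<theta> > 0" unfolding \<theta>_def using mx by simp
  have "\<theta> * E2 \<le> mT"
  proof -
    have "E2 \<le> mT * max t (E2 / mT)"
    proof -
      have "E2 = mT * (E2 / mT)" using mT_pos by simp
      also have "\<dots> \<le> mT * max t (E2 / mT)" using mT_pos by (intro mult_left_mono) auto
      finally show ?thesis .
    qed
    then show ?thesis unfolding \<theta>_def using mx by (simp add: field_simps)
  qed
  then have ph: "phi \<theta> \<le> 1 - \<theta> * mT / 2" using phi_le th by simp
  have q: "0 < \<theta> * mT / 2" using th mT_pos by simp
  have pn: "0 \<le> phi \<theta>" "phi \<theta> < 1" using phi_nonneg ph q by auto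
  have "(\<Sum>n. emeasure M (Aset t n)) \<le> (\<Sum>n. ennreal (exp (\<theta> * t) * phi \<theta> ^ n))"
    by (intro suminf_le prob_Aset th) auto
  also have "\<dots> = ennreal (\<Sum>n. exp (\<theta> * t) * phi \<theta> ^ n)"
    using pn by (intro suminf_ennreal2) (auto intro!: summable_mult)
  also have "(\<Sum>n. exp (\<theta> * t) * phi \<theta> ^ n) = exp (\<theta> * t) * (1 / (1 - phi \<theta>))"
    using pn by (subst suminf_mult) (auto simp: suminf_geometric)
  also have "\<dots> \<le> Ebound t"
  proof -
    have "\<theta> * t \<le> 1" unfolding \<theta>_def using mx by (simp add: field_simps)
    then have e: "exp (\<theta> * t) \<le> exp 1" by simp
    have "1 / (1 - phi \<theta>) \<le> 1 / (\<theta> * mT / 2)"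
      using ph q by (intro divide_left_mono) auto
    also have "\<dots> = 2 * max t (E2 / mT) / mT" unfolding \<theta>_def using mx mT_pos by simp
    finally have f: "1 / (1 - phi \<theta>) \<le> 2 * max t (E2 / mT) / mT" .
    have "exp (\<theta> * t) * (1 / (1 - phi \<theta>)) \<le> exp 1 * (2 * max t (E2 / mT) / mT)"
      using e f pn by (intro mult_mono) auto
    moreover have "exp 1 * (2 * max t (E2 / mT) / mT) = 2 * exp 1 * max t (E2 / mT) / mT" by simp
    ultimately show ?thesis unfolding Ebound_def by linarith
  qed
  finally show ?thesis by (simp add: ennreal_leI)
qed

definition "ind t i \<omega> = (of_bool (Ps i \<omega> \<le> t) :: real)"

lemma ind_meas[measurable]: "ind t i \<in> borel_measurable M"
  unfolding ind_def by measurable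

lemma ind_restrict: "ind t k \<omega> = of_bool ((\<Sum>l<k. snd (restrict (\<lambda>i. X i \<omega>) {..<k} l)) \<le> t)"
proof -
  have "(\<Sum>l<k. snd (restrict (\<lambda>i. X i \<omega>) {..<k} l)) = Ps k \<omega>"
    unfolding Ps_def by (intro sum.cong) auto
  then show ?thesis unfolding ind_def by simp
qed

lemma ind_int[simp]: "integrable M (ind t k)"
  by (rule integrable_const_bound[where B=1]) (auto simp: ind_def)

lemma ind_expect: "expectation (ind t k) = prob (Aset t k)"
proof -
  have "expectation (ind t k) = expectation (indicator (Aset t k))"
    by (rule Bochner_Integration.integral_cong[OF refl]) (auto simp: ind_def Aset_def indicator_def)
  then show ?thesis by simp
qed

lemma ind_prod:
  fixes h :: "bool \<times> real \<Rightarrow> real"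
  assumes [measurable]: "h \<in> borel_measurable trade_space" and ih: "integrable M (\<lambda>\<omega>. h (X 0 \<omega>))"
  shows "integrable M (\<lambda>\<omega>. ind t k \<omega> * h (X k \<omega>))"
    and "expectation (\<lambda>\<omega>. ind t k \<omega> * h (X k \<omega>)) = prob (Aset t k) * expectation (\<lambda>\<omega>. h (X 0 \<omega>))"
proof -
  have ihk: "integrable M (\<lambda>\<omega>. h (X k \<omega>))" using ih ident_integral(2)[of h k] by simp
  have g: "(\<lambda>x. of_bool ((\<Sum>l<k. snd (x l)) \<le> t) :: real) \<in> borel_measurable (PiM {..<k} (\<lambda>_. trade_space))"
    by measurable
  note * = indep_split[OF g assms(1) ind_restrict ind_int ihk]
  show "integrable M (\<lambda>\<omega>. ind t k \<omega> * h (X k \<omega>))" by (rule *(1))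
  show "expectation (\<lambda>\<omega>. ind t k \<omega> * h (X k \<omega>)) = prob (Aset t k) * expectation (\<lambda>\<omega>. h (X 0 \<omega>))"
    using *(2) ind_expect ident_integral(1)[of h k] by simp
qed
end

locale renew2 = renew + fixes ly :: "bool \<Rightarrow> real"
begin

definition "Kb = \<bar>ly True\<bar> + \<bar>ly False\<bar>"
definition "aY = expectation (\<lambda>\<omega>. ly (fst (X 0 \<omega>)))"
definition "rho = aY / mT"
definition "rr x = ly (fst x) - rho * snd x"
definition "sig2 = expectation (\<lambda>\<omega>. (rr (X 0 \<omega>))\<^sup>2)"
definition "Q t k \<omega> = (\<Sum>i<k. rr (X i \<omega>) * ind t i \<omega>)"

lemma ly_bound: "\<bar>ly s\<bar> \<le> Kb"
  unfolding Kb_def by (cases s) auto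

lemma rr_meas[measurable]: "rr \<in> borel_measurable trade_space"
  unfolding rr_def by measurable

lemma Q_meas[measurable]: "Q t k \<in> borel_measurable M"
  unfolding Q_def by measurable

lemma ly_int: "integrable M (\<lambda>\<omega>. ly (fst (X i \<omega>)))"
  by (rule integrable_const_bound[where B=Kb]) (auto simp: ly_bound)

lemma snd_int: "integrable M (\<lambda>\<omega>. snd (X i \<omega>))"
  using int1 ident_integral(2)[of snd i] by simp

lemma snd2_int: "integrable M (\<lambda>\<omega>. (snd (X i \<omega>))\<^sup>2)"
  using int2 ident_integral(2)[of "\<lambda>x. (snd x)\<^sup>2" i] by simp

lemma rr_int: "integrable M (\<lambda>\<omega>. rr (X i \<omega>))"
  unfolding rr_def using ly_int snd_int by auto

lemma rr_mean: "expectation (\<lambda>\<omega>. rr (X i \<omega>)) = 0"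
proof -
  have "expectation (\<lambda>\<omega>. rr (X i \<omega>)) = expectation (\<lambda>\<omega>. rr (X 0 \<omega>))"
    by (rule ident_integral) measurable
  also have "\<dots> = aY - rho * mT"
    unfolding rr_def aY_def mT_def using ly_int snd_int by simp
  also have "\<dots> = 0" unfolding rho_def using mT_pos by simp
  finally show ?thesis .
qed

lemma rr2_int: "integrable M (\<lambda>\<omega>. (rr (X i \<omega>))\<^sup>2)"
proof (rule Bochner_Integration.integrable_bound)
  show "integrable M (\<lambda>\<omega>. 2 * Kb\<^sup>2 + 2 * rho\<^sup>2 * (snd (X i \<omega>))\<^sup>2)"
    using snd2_int by auto
  show "AE \<omega> in M. norm ((rr (X i \<omega>))\<^sup>2) \<le> norm (2 * Kb\<^sup>2 + 2 * rho\<^sup>2 * (snd (X i \<omega>))\<^sup>2)"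
  proof (intro AE_I2)
    fix \<omega>
    define a where "a = ly (fst (X i \<omega>))"
    define b where "b = rho * snd (X i \<omega>)"
    have "a\<^sup>2 \<le> Kb\<^sup>2" unfolding a_def using ly_bound
      by (metis abs_le_square_iff abs_of_nonneg abs_ge_zero order_trans)
    moreover have "(a - b)\<^sup>2 \<le> 2 * a\<^sup>2 + 2 * b\<^sup>2"
      using sum_squares_ge_zero[of "a+b" 0] by (simp add: power2_eq_square algebra_simps)
    ultimately have "(a - b)\<^sup>2 \<le> 2 * Kb\<^sup>2 + 2 * rho\<^sup>2 * (snd (X i \<omega>))\<^sup>2"
      unfolding b_def by (simp add: power_mult_distrib)
    then show "norm ((rr (X i \<omega>))\<^sup>2) \<le> norm (2 * Kb\<^sup>2 + 2 * rho\<^sup>2 * (snd (X i \<omega>))\<^sup>2)"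
      unfolding rr_def a_def b_def by simp
  qed
qed measurable

lemma rr2_expect: "expectation (\<lambda>\<omega>. (rr (X i \<omega>))\<^sup>2) = sig2"
  unfolding sig2_def by (rule ident_integral) measurable

lemma sq_int_imp_int:
  fixes g :: "'a \<Rightarrow> real"
  assumes [measurable]: "g \<in> borel_measurable M" and "integrable M (\<lambda>\<omega>. (g \<omega>)\<^sup>2)"
  shows "integrable M g"
proof (rule Bochner_Integration.integrable_bound)
  show "integrable M (\<lambda>\<omega>. 1 + (g \<omega>)\<^sup>2)" using assms by auto
  show "AE \<omega> in M. norm (g \<omega>) \<le> norm (1 + (g \<omega>)\<^sup>2)"
  proof (intro AE_I2)
    fix \<omega> show "norm (g \<omega>) \<le> norm (1 + (g \<omega>)\<^sup>2)"
      using sum_squares_ge_zero[of "\<bar>g \<omega>\<bar> - 1" 0]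
      by (simp add: power2_eq_square algebra_simps abs_mult_self_eq)
  qed
qed measurable

lemma Q_restrict: "Q t k \<omega> * ind t k \<omega> =
   (\<Sum>i<k. rr (restrict (\<lambda>i. X i \<omega>) {..<k} i) * of_bool ((\<Sum>l<i. snd (restrict (\<lambda>i. X i \<omega>) {..<k} l)) \<le> t))
   * of_bool ((\<Sum>l<k. snd (restrict (\<lambda>i. X i \<omega>) {..<k} l)) \<le> t)"
proof -
  have a: "(\<Sum>l<k. snd (restrict (\<lambda>i. X i \<omega>) {..<k} l)) = Ps k \<omega>"
    unfolding Ps_def by (intro sum.cong) auto
  have b: "(\<Sum>i<k. rr (restrict (\<lambda>i. X i \<omega>) {..<k} i) * of_bool ((\<Sum>l<i. snd (restrict (\<lambda>i. X i \<omega>) {..<k} l)) \<le> t))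
     = Q t k \<omega>"
    unfolding Q_def
  proof (intro sum.cong refl)
    fix i assume i: "i \<in> {..<k}"
    have "(\<Sum>l<i. snd (restrict (\<lambda>i. X i \<omega>) {..<k} l)) = Ps i \<omega>"
      unfolding Ps_def using i by (intro sum.cong) auto
    then show "rr (restrict (\<lambda>i. X i \<omega>) {..<k} i) * of_bool ((\<Sum>l<i. snd (restrict (\<lambda>i. X i \<omega>) {..<k} l)) \<le> t)
       = rr (X i \<omega>) * ind t i \<omega>"
      using i by (simp add: ind_def)
  qed
  show ?thesis unfolding a b by (simp add: ind_def)
qed

lemma Q_sq: "integrable M (\<lambda>\<omega>. (Q t k \<omega>)\<^sup>2) \<and>
   expectation (\<lambda>\<omega>. (Q t k \<omega>)\<^sup>2) = sig2 * (\<Sum>i<k. prob (Aset t i))"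
proof (induction k)
  case 0
  then show ?case by (simp add: Q_def)
next
  case (Suc k)
  then have iQ2: "integrable M (\<lambda>\<omega>. (Q t k \<omega>)\<^sup>2)" by simp
  have iQ: "integrable M (Q t k)" by (rule sq_int_imp_int[OF _ iQ2]) measurable
  have iG: "integrable M (\<lambda>\<omega>. Q t k \<omega> * ind t k \<omega>)"
  proof (rule Bochner_Integration.integrable_bound[OF iQ])
    show "AE \<omega> in M. norm (Q t k \<omega> * ind t k \<omega>) \<le> norm (Q t k \<omega>)"
      by (intro AE_I2) (auto simp: ind_def)
  qed measurable
  have g1: "(\<lambda>x. (\<Sum>i<k. rr (x i) * of_bool ((\<Sum>l<i. snd (x l)) \<le> t)) * of_bool ((\<Sum>l<k. snd (x l)) \<le> t) :: real)
      \<in> borel_measurable (PiM {..<k} (\<lambda>_. trade_space))"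
    by measurable
  note cross = indep_split[OF g1 rr_meas Q_restrict iG rr_int]
  note sq = ind_prod[of "\<lambda>x. (rr x)\<^sup>2" t k]
  have i3: "integrable M (\<lambda>\<omega>. ind t k \<omega> * (rr (X k \<omega>))\<^sup>2)"
    by (rule sq(1)) (use rr2_int in auto)
  have e3: "expectation (\<lambda>\<omega>. ind t k \<omega> * (rr (X k \<omega>))\<^sup>2) = prob (Aset t k) * sig2"
    using sq(2) rr2_int[of 0] rr2_expect[of 0] by simp
  have expand: "\<And>\<omega>. (Q t (Suc k) \<omega>)\<^sup>2 = (Q t k \<omega>)\<^sup>2 + 2 * ((Q t k \<omega> * ind t k \<omega>) * rr (X k \<omega>))
       + ind t k \<omega> * (rr (X k \<omega>))\<^sup>2"
    by (simp add: Q_def ind_def power2_eq_square algebra_simps)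
  have "integrable M (\<lambda>\<omega>. (Q t k \<omega>)\<^sup>2 + 2 * ((Q t k \<omega> * ind t k \<omega>) * rr (X k \<omega>))
       + ind t k \<omega> * (rr (X k \<omega>))\<^sup>2)"
    using iQ2 cross(1) i3 by auto
  moreover have "expectation (\<lambda>\<omega>. (Q t k \<omega>)\<^sup>2 + 2 * ((Q t k \<omega> * ind t k \<omega>) * rr (X k \<omega>))
       + ind t k \<omega> * (rr (X k \<omega>))\<^sup>2) = sig2 * (\<Sum>i<Suc k. prob (Aset t i))"
    using iQ2 cross i3 e3 Suc.IH rr_mean[of k] by (simp add: algebra_simps)
  ultimately show ?case unfolding expand by simp
qed

definition "Nn t \<omega> = card {n. 1 \<le> n \<and> Ps n \<omega> \<le> t}"
definition "G t \<omega> = (1/t) * (\<Sum>i<Nn t \<omega>. ly (fst (X i \<omega>)))"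
definition "Cb t = 3 * sig2 * Ebound t + 3 * Kb\<^sup>2 + 3 * rho\<^sup>2 * E2 * Ebound t"

lemma Nn_meas[measurable]: "Nn t \<in> measurable M (count_space UNIV)"
  unfolding Nn_def by (rule measurable_card) simp

lemma G_meas[measurable]: "G t \<in> borel_measurable M"
proof -
  have "(\<lambda>\<omega>. (\<lambda>n \<omega>. (1/t) * (\<Sum>i<n. ly (fst (X i \<omega>)))) (Nn t \<omega>) \<omega>) \<in> borel_measurable M"
    by (rule measurable_compose_countable[OF _ Nn_meas]) measurable
  then show ?thesis unfolding G_def by simp
qed

lemma sig2_nonneg: "sig2 \<ge> 0" unfolding sig2_def by simp

lemma Ebound_nonneg: "t > 0 \<Longrightarrow> Ebound t \<ge> 0"
  unfolding Ebound_def using mT_pos by (auto intro!: divide_nonneg_pos)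

lemma sum_prob_real: assumes "t > 0" shows "(\<Sum>i<k. prob (Aset t i)) \<le> Ebound t"
proof -
  have "ennreal (\<Sum>i<k. prob (Aset t i)) = (\<Sum>i<k. emeasure M (Aset t i))"
    by (simp add: emeasure_eq_measure)
  also have "\<dots> \<le> (\<Sum>i. emeasure M (Aset t i))"
    by (rule sum_le_suminf) (auto intro: summableI)
  also have "\<dots> \<le> ennreal (Ebound t)" by (rule sum_prob[OF assms])
  finally show ?thesis using Ebound_nonneg[OF assms] by simp
qed

lemma AE_good: assumes "t > 0"
  shows "AE \<omega> in M. (\<forall>i. snd (X i \<omega>) > 0) \<and> finite {n. Ps n \<omega> \<le> t}"
proof -
  have "(\<integral>\<^sup>+\<omega>. (\<Sum>n. indicator (Aset t n) \<omega>) \<partial>M) = (\<Sum>n. emeasure M (Aset t n))"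
    by (subst nn_integral_suminf) auto
  also have "\<dots> \<le> ennreal (Ebound t)" by (rule sum_prob[OF assms])
  finally have "(\<integral>\<^sup>+\<omega>. (\<Sum>n. indicator (Aset t n) \<omega>) \<partial>M) \<noteq> \<infinity>"
    by (auto simp: top_unique)
  then have F: "AE \<omega> in M. (\<Sum>n. indicator (Aset t n) \<omega> :: ennreal) \<noteq> \<infinity>"
    by (intro nn_integral_PInf_AE) auto
  have T: "AE \<omega> in M. \<forall>i. snd (X i \<omega>) > 0"
    using Tpos by (simp add: AE_all_countable)
  show ?thesis
    using F T AE_space
  proof eventually_elim
    case (elim \<omega>)
    have "emeasure (count_space UNIV) {n. Ps n \<omega> \<le> t} = (\<integral>\<^sup>+n. indicator {n. Ps n \<omega> \<le> t} n \<partial>count_space UNIV)"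
      by simp
    also have "\<dots> = (\<Sum>n. indicator {n. Ps n \<omega> \<le> t} n)"
      by (rule nn_integral_count_space_nat)
    also have "\<dots> = (\<Sum>n. indicator (Aset t n) \<omega>)"
      using elim by (intro suminf_cong) (auto simp: Aset_def indicator_def)
    finally have "emeasure (count_space UNIV) {n. Ps n \<omega> \<le> t} \<noteq> \<infinity>" using elim by simp
    then have "finite {n. Ps n \<omega> \<le> t}"
      by (metis emeasure_count_space_infinite infinity_ennreal_def subset_UNIV)
    with elim show ?case by simp
  qed
qed

definition "Sk t k \<omega> = (\<Sum>i<k. ind t i \<omega> * (snd (X i \<omega>))\<^sup>2)"

lemma Sk_ii: "integrable M (\<lambda>\<omega>. ind t i \<omega> * (snd (X i \<omega>))\<^sup>2)"
  by (rule ind_prod(1)) (use int2 in auto)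

lemma Sk_int: "integrable M (Sk t k)"
  unfolding Sk_def by (rule Bochner_Integration.integrable_sum) (rule Sk_ii)

lemma Sk_expect: "expectation (Sk t k) = E2 * (\<Sum>i<k. prob (Aset t i))"
proof -
  have "expectation (Sk t k) = (\<Sum>i<k. expectation (\<lambda>\<omega>. ind t i \<omega> * (snd (X i \<omega>))\<^sup>2))"
    unfolding Sk_def by (rule Bochner_Integration.integral_sum) (rule Sk_ii)
  also have "\<dots> = (\<Sum>i<k. prob (Aset t i) * E2)"
    using ind_prod(2)[of "\<lambda>x. (snd x)\<^sup>2"] int2 unfolding E2_def by simp
  finally show ?thesis by (simp add: sum_distrib_left mult.commute)
qed

lemma pointwise:
  assumes t: "t > 0" and pos: "\<forall>i. snd (X i \<omega>) > 0" and fin: "finite {n. Ps n \<omega> \<le> t}"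
    and k: "card {n. Ps n \<omega> \<le> t} \<le> k"
  shows "(G t \<omega> - rho)\<^sup>2 \<le> (3 * (Q t k \<omega>)\<^sup>2 + 3 * Kb\<^sup>2 + 3 * rho\<^sup>2 * Sk t k \<omega>) / t\<^sup>2"
proof -
  have pb: "((\<Sum>i<Nn t \<omega>. ly (fst (X i \<omega>))) - rho * t)\<^sup>2 \<le> 3 * (Q t k \<omega>)\<^sup>2 + 3 * Kb\<^sup>2 + 3 * rho\<^sup>2 * Sk t k \<omega>"
    using path_bound[of "\<lambda>i. snd (X i \<omega>)" "\<lambda>i. ly (fst (X i \<omega>))" Kb t k rho] pos ly_bound t fin k
    unfolding Nn_def Q_def Sk_def ind_def Ps_def rr_def by (simp add: ac_simps)
  have "G t \<omega> - rho = ((\<Sum>i<Nn t \<omega>. ly (fst (X i \<omega>))) - rho * t) / t"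
    unfolding G_def using t by (simp add: field_simps)
  then have "(G t \<omega> - rho)\<^sup>2 = ((\<Sum>i<Nn t \<omega>. ly (fst (X i \<omega>))) - rho * t)\<^sup>2 / t\<^sup>2"
    by (simp add: power_divide)
  also have "\<dots> \<le> (3 * (Q t k \<omega>)\<^sup>2 + 3 * Kb\<^sup>2 + 3 * rho\<^sup>2 * Sk t k \<omega>) / t\<^sup>2"
    using pb by (intro divide_right_mono) auto
  finally show ?thesis .
qed

lemma main_nn: assumes t: "t > 0"
  shows "(\<integral>\<^sup>+\<omega>. ennreal ((G t \<omega> - rho)\<^sup>2) \<partial>M) \<le> ennreal (Cb t / t\<^sup>2)"
proof -
  define u where "u k \<omega> = ennreal ((3 * (Q t k \<omega>)\<^sup>2 + 3 * Kb\<^sup>2 + 3 * rho\<^sup>2 * Sk t k \<omega>) / t\<^sup>2)" for k \<omega>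
  have Sk_meas[measurable]: "Sk t k \<in> borel_measurable M" for k unfolding Sk_def by measurable
  have u_meas: "u k \<in> borel_measurable M" for k unfolding u_def by measurable
  have "AE \<omega> in M. ennreal ((G t \<omega> - rho)\<^sup>2) \<le> liminf (\<lambda>k. u k \<omega>)"
    using AE_good[OF t]
  proof eventually_elim
    case (elim \<omega>)
    show ?case
    proof (rule Liminf_bounded, rule eventually_sequentiallyI)
      fix k assume "card {n. Ps n \<omega> \<le> t} \<le> k"
      then show "ennreal ((G t \<omega> - rho)\<^sup>2) \<le> u k \<omega>"
        unfolding u_def using pointwise[OF t] elim by (intro ennreal_leI) auto
    qed
  qed
  then have "(\<integral>\<^sup>+\<omega>. ennreal ((G t \<omega> - rho)\<^sup>2) \<partial>M) \<le> (\<integral>\<^sup>+\<omega>. liminf (\<lambda>k. u k \<omega>) \<partial>M)"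
    by (rule nn_integral_mono_AE)
  also have "\<dots> \<le> liminf (\<lambda>k. integral\<^sup>N M (u k))"
    by (rule nn_integral_liminf[OF u_meas])
  also have "\<dots> \<le> ennreal (Cb t / t\<^sup>2)"
  proof -
    have "integral\<^sup>N M (u k) \<le> ennreal (Cb t / t\<^sup>2)" for k
    proof -
      have int: "integrable M (\<lambda>\<omega>. (3 * (Q t k \<omega>)\<^sup>2 + 3 * Kb\<^sup>2 + 3 * rho\<^sup>2 * Sk t k \<omega>) / t\<^sup>2)"
        using Q_sq[of t k] Sk_int[of t k] by auto
      have Sk0: "Sk t k \<omega> \<ge> 0" for \<omega> unfolding Sk_def ind_def by (intro sum_nonneg) auto
      have eq1: "integral\<^sup>N M (u k) = ennreal (expectation (\<lambda>\<omega>. (3 * (Q t k \<omega>)\<^sup>2 + 3 * Kb\<^sup>2 + 3 * rho\<^sup>2 * Sk t k \<omega>) / t\<^sup>2))"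
        unfolding u_def using Sk0 by (intro nn_integral_eq_integral int AE_I2) auto
      have "expectation (\<lambda>\<omega>. (3 * (Q t k \<omega>)\<^sup>2 + 3 * Kb\<^sup>2 + 3 * rho\<^sup>2 * Sk t k \<omega>) / t\<^sup>2)
          = (3 * (sig2 * (\<Sum>i<k. prob (Aset t i))) + 3 * Kb\<^sup>2 + 3 * rho\<^sup>2 * (E2 * (\<Sum>i<k. prob (Aset t i)))) / t\<^sup>2"
        using Q_sq[of t k] Sk_int[of t k] Sk_expect[of t k] by (simp add: prob_space)
      also have "\<dots> \<le> Cb t / t\<^sup>2"
      proof -
        have s: "(\<Sum>i<k. prob (Aset t i)) \<le> Ebound t" by (rule sum_prob_real[OF t])
        have "sig2 * (\<Sum>i<k. prob (Aset t i)) \<le> sig2 * Ebound t"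
          using s sig2_nonneg by (intro mult_left_mono) auto
        moreover have "rho\<^sup>2 * (E2 * (\<Sum>i<k. prob (Aset t i))) \<le> rho\<^sup>2 * (E2 * Ebound t)"
          using s E2_nonneg by (intro mult_left_mono) auto
        ultimately show ?thesis unfolding Cb_def
          by (intro divide_right_mono) auto
      qed
      finally show ?thesis unfolding eq1 by (rule ennreal_leI)
    qed
    then show ?thesis
      by (intro order_trans[OF Liminf_le_Limsup] Limsup_bounded) auto
  qed
  finally show ?thesis .
qed

lemma var_le_shift:
  fixes Z :: "'a \<Rightarrow> real"
  assumes [measurable]: "Z \<in> borel_measurable M" and i1: "integrable M Z" and i2: "integrable M (\<lambda>x. (Z x)\<^sup>2)"
  shows "variance Z \<le> expectation (\<lambda>x. (Z x - c)\<^sup>2)"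
proof -
  have "expectation (\<lambda>x. (Z x - c)\<^sup>2) = expectation (\<lambda>x. (Z x)\<^sup>2 - 2 * c * Z x + c\<^sup>2)"
    by (intro arg_cong[where f=expectation] ext) (simp add: power2_diff algebra_simps)
  also have "\<dots> = expectation (\<lambda>x. (Z x)\<^sup>2) - 2 * c * expectation Z + c\<^sup>2"
    using i1 i2 by (simp add: prob_space)
  finally have e: "expectation (\<lambda>x. (Z x - c)\<^sup>2) = expectation (\<lambda>x. (Z x)\<^sup>2) - 2 * c * expectation Z + c\<^sup>2" .
  have v: "variance Z = expectation (\<lambda>x. (Z x)\<^sup>2) - (expectation Z)\<^sup>2" by (rule variance_eq[OF i1 i2])
  have "0 \<le> (expectation Z - c)\<^sup>2" by simp
  then have sq: "0 \<le> (expectation Z)\<^sup>2 - 2 * c * expectation Z + c\<^sup>2"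
    unfolding power2_diff by (simp add: algebra_simps)
  show ?thesis using v e sq by linarith
qed

lemma final_t: assumes t: "t > 0"
  shows "integrable M (\<lambda>\<omega>. (G t \<omega>)\<^sup>2)" and "variance (G t) \<le> Cb t / t\<^sup>2"
proof -
  have nn: "(\<integral>\<^sup>+\<omega>. ennreal ((G t \<omega> - rho)\<^sup>2) \<partial>M) \<le> ennreal (Cb t / t\<^sup>2)" by (rule main_nn[OF t])
  have iD2: "integrable M (\<lambda>\<omega>. (G t \<omega> - rho)\<^sup>2)"
  proof (rule integrableI_bounded)
    show "(\<integral>\<^sup>+\<omega>. ennreal (norm ((G t \<omega> - rho)\<^sup>2)) \<partial>M) < \<infinity>"
      using nn by (simp add: le_less_trans)
  qed measurable
  have iD: "integrable M (\<lambda>\<omega>. G t \<omega> - rho)" by (rule sq_int_imp_int[OF _ iD2]) measurable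
  have iG: "integrable M (G t)"
  proof -
    have e: "(\<lambda>\<omega>. (G t \<omega> - rho) + rho) = G t" by (rule ext) simp
    have "integrable M (\<lambda>\<omega>. (G t \<omega> - rho) + rho)"
      by (rule Bochner_Integration.integrable_add[OF iD]) simp
    then show ?thesis unfolding e .
  qed
  have "integrable M (\<lambda>\<omega>. (G t \<omega> - rho)\<^sup>2 + 2 * rho * (G t \<omega> - rho) + rho\<^sup>2)"
    using iD2 iD by auto
  moreover have "(\<lambda>\<omega>. (G t \<omega> - rho)\<^sup>2 + 2 * rho * (G t \<omega> - rho) + rho\<^sup>2) = (\<lambda>\<omega>. (G t \<omega>)\<^sup>2)"
    by (auto simp: power2_diff algebra_simps power2_eq_square)
  ultimately show iG2: "integrable M (\<lambda>\<omega>. (G t \<omega>)\<^sup>2)" by simp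
  have "variance (G t) \<le> expectation (\<lambda>\<omega>. (G t \<omega> - rho)\<^sup>2)"
    by (rule var_le_shift[OF _ iG iG2]) measurable
  also have "\<dots> \<le> Cb t / t\<^sup>2"
  proof -
    have "ennreal (expectation (\<lambda>\<omega>. (G t \<omega> - rho)\<^sup>2)) = (\<integral>\<^sup>+\<omega>. ennreal ((G t \<omega> - rho)\<^sup>2) \<partial>M)"
      by (rule nn_integral_eq_integral[symmetric]) (use iD2 in auto)
    with nn have "ennreal (expectation (\<lambda>\<omega>. (G t \<omega> - rho)\<^sup>2)) \<le> ennreal (Cb t / t\<^sup>2)" by simp
    moreover have "Cb t \<ge> 0"
      unfolding Cb_def using sig2_nonneg Ebound_nonneg[OF t] E2_nonneg by auto
    ultimately show ?thesis by (simp add: ennreal_le_iff)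
  qed
  finally show "variance (G t) \<le> Cb t / t\<^sup>2" .
qed

lemma final_bigo: "(\<lambda>t. variance (G t)) \<in> O[at_top](\<lambda>t. 1 / t)"
proof -
  define A where "A = (3 * sig2 + 3 * rho\<^sup>2 * E2) * (2 * exp 1 / mT)"
  define B where "B = 3 * Kb\<^sup>2"
  have A0: "A \<ge> 0" unfolding A_def using sig2_nonneg E2_nonneg mT_pos by auto
  have B0: "B \<ge> 0" unfolding B_def by simp
  show ?thesis
  proof (rule bigoI[where c="A + B"])
    show "eventually (\<lambda>t. norm (variance (G t)) \<le> (A + B) * norm (1 / t)) at_top"
      unfolding eventually_at_top_linorder
    proof (intro exI[of _ "max 1 (E2 / mT)"] allI impI)
      fix t :: real assume "max 1 (E2 / mT) \<le> t"
      then have t1: "1 \<le> t" and tE: "E2 / mT \<le> t" by auto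
      then have t: "t > 0" by simp
      have Eb: "Ebound t = t * (2 * exp 1 / mT)" unfolding Ebound_def using tE by (simp add: max_def)
      have "Cb t = A * t + B" unfolding Cb_def Eb A_def B_def by (simp add: algebra_simps)
      also have "\<dots> \<le> (A + B) * t" using mult_left_mono[OF t1 B0] by (simp add: algebra_simps)
      finally have C: "Cb t \<le> (A + B) * t" .
      have "variance (G t) \<le> Cb t / t\<^sup>2" by (rule final_t(2)[OF t])
      also have "\<dots> \<le> (A + B) * t / t\<^sup>2" using C t by (intro divide_right_mono) auto
      also have "\<dots> = (A + B) * (1 / t)" using t by (simp add: power2_eq_square)
      finally show "norm (variance (G t)) \<le> (A + B) * norm (1 / t)"
        using variance_positive[of "G t"] t by simp
    qed
  qed
qed
end

theorem proposition2:
  fixes M :: "'a measure"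
    and S :: "nat \<Rightarrow> 'a \<Rightarrow> bool"
    and T :: "nat \<Rightarrow> 'a \<Rightarrow> real"
    and L D U c f W0 :: real
  assumes "prob_space M"
    and "c > 0" and "L < D" and "D < U" and "U - D > c" and "f \<ge> 0"
    and "1 + f * vminus L D c > 0"
    and "W0 > 0"
    and "prob_space.indep_vars M (\<lambda>_. trade_space) (\<lambda>i \<omega>. (S i \<omega>, T i \<omega>)) UNIV"
    and "\<And>i. distr M trade_space (\<lambda>\<omega>. (S i \<omega>, T i \<omega>))
              = distr M trade_space (\<lambda>\<omega>. (S 0 \<omega>, T 0 \<omega>))"
    and "\<And>i. AE \<omega> in M. T i \<omega> > 0"
    and "integrable M (T 0)"
    and "integrable M (\<lambda>\<omega>. (T 0 \<omega>)\<^sup>2)"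
  shows "(\<forall>t>0. integrable M (\<lambda>\<omega>. (growth_rate W0 f L D U c S T t \<omega>)\<^sup>2))
       \<and> (\<lambda>t. prob_space.variance M (growth_rate W0 f L D U c S T t)) \<in> O[at_top](\<lambda>t. 1 / t)"
proof -
  define X where "X = (\<lambda>i \<omega>. (S i \<omega>, T i \<omega>))"
  define ly where "ly = (\<lambda>s. ln (trade_factor f L D U c s))"
  interpret P: prob_space M by (rule assms(1))
  interpret R: renew2 M X ly
  proof (unfold_locales)
    show "prob_space.indep_vars M (\<lambda>_. trade_space) X UNIV" using assms(9) unfolding X_def .
    show "\<And>i. distr M trade_space (X i) = distr M trade_space (X 0)" using assms(10) unfolding X_def .
    show "\<And>i. AE \<omega> in M. snd (X i \<omega>) > 0" using assms(11) unfolding X_def by simp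
    show "integrable M (\<lambda>\<omega>. snd (X 0 \<omega>))" using assms(12) unfolding X_def by simp
    show "integrable M (\<lambda>\<omega>. (snd (X 0 \<omega>))\<^sup>2)" using assms(13) unfolding X_def by simp
  qed
  have fpos: "trade_factor f L D U c s > 0" for s
  proof (cases s)
    case True
    have "exp (U - D - c) > 1" using assms(5) by simp
    then have "0 \<le> f * vplus D U c" unfolding vplus_def using assms(6) by simp
    then show ?thesis using True unfolding trade_factor_def by simp
  next
    case False
    then show ?thesis using assms(7) unfolding trade_factor_def by simp
  qed
  have eq: "growth_rate W0 f L D U c S T t = R.G t" for t
  proof
    fix \<omega>
    have N: "num_trades T t \<omega> = R.Nn t \<omega>"
      unfolding num_trades_def R.Nn_def R.Ps_def by (simp add: X_def)
    have "wealth W0 f L D U c S T t \<omega> / W0 = (\<Prod>i<R.Nn t \<omega>. trade_factor f L D U c (S i \<omega>))"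
      unfolding wealth_def N using assms(8) by simp
    then have "ln (wealth W0 f L D U c S T t \<omega> / W0) = (\<Sum>i<R.Nn t \<omega>. ly (fst (X i \<omega>)))"
      using fpos by (simp add: ln_prod ly_def X_def less_imp_neq[symmetric])
    then show "growth_rate W0 f L D U c S T t \<omega> = R.G t \<omega>"
      unfolding growth_rate_def R.G_def by simp
  qed
  show ?thesis unfolding eq using R.final_t(1) R.final_bigo by auto
qed

end
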